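(* Consider the common support-set model described in the context with $J=T$, let $h\ge1$, $m\ge0$, and let $\mathsf p_1,\dots,\mathsf p_h,\mathsf q_1,\dots,\mathsf q_{m+1}$ be distinct sensors. Then (whenever the conditioning events have positive probability) $$\Pr\Big(i\in\mathcal J\ \Big|\ i\in\bigcap_{l=1}^{h}\hat{\mathcal T}_{\mathsf p_l},\ i\in\bigcap_{l=1}^{m}\hat{\mathcal T}_{\mathsf q_l}^{\complement}\Big)\ \ge\ \Pr\Big(i\in\mathcal J\ \Big|\ i\in\bigcap_{l=1}^{h-1}\hat{\mathcal T}_{\mathsf p_l},\ i\in\bigcap_{l=1}^{m+1}\hat{\mathcal T}_{\mathsf q_l}^{\complement}\Big).$$
   Context: Let $N>T\ge1$ be integers and $\Omega=\{1,\dots,N\}$; complements are taken in $\Omega$. A finite set $\mathcal L$ of sensors is given. Common support-set model: every sensor $\mathsf p\in\mathcal L$ has the same fixed true support set $\mathcal T_{\mathsf p}=\mathcal J\subseteq\Omega$ with $|\mathcal J|=J=T$. Each sensor has a random estimated support set $\hat{\mathcal T}_{\mathsf p}\subseteq\Omega$. A random index $i$ is uniformly distributed on $\Omega$ and independent of all estimates. System model: there is $\epsilon$ with $0\le\epsilon\le (N-T)/N$, common to all sensors, such that for every sensor $\mathsf p$ and every $j\in\Omega$, $\Pr(j\in\hat{\mathcal T}_{\mathsf p})=1-\epsilon$ if $j\in\mathcal T_{\mathsf p}$ and $\Pr(j\in\hat{\mathcal T}_{\mathsf p})=\frac{T}{N-T}\epsilon$ if $j\notin\mathcal T_{\mathsf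 p}$ (so $\Pr(i\in\hat{\mathcal T}_{\mathsf p})=T/N$, detection probability $1-\epsilon$, miss probability $\epsilon$, false-alarm probability $\frac{T}{N-T}\epsilon$). For each fixed $j\in\Omega$, the events $\{j\in\hat{\mathcal T}_{\mathsf p}\}$, $\mathsf p\in\mathcal L$, are mutually independent. *)

theory Defs
  imports "HOL-Probability.Probability"
begin

end

theory Submission
  imports Defs
begin

lemma (in prob_space) key:
  fixes That :: "'s \<Rightarrow> 'a \<Rightarrow> nat set" and i :: "'a \<Rightarrow> nat"
  assumes PL: "P \<subseteq> L" and QL: "Q \<subseteq> L" and PQ: "P \<inter> Q = {}" and fin: "finite P" "finite Q"
  and indj: "indep_events (\<lambda>s. {\<omega> \<in> space M. j \<in> That s \<omega>}) L"
  and indi: "indep_set (sigma_sets (space M) {{\<omega> \<in> space M. i \<omega> = j} | j. j \<in> {1..N}})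
           (sigma_sets (space M) {{\<omega> \<in> space M. j \<in> That s \<omega>} | s j. s \<in> L \<and> j \<in> {1..N}})"
  and j: "j \<in> {1..N}"
  shows "prob {\<omega> \<in> space M. i \<omega> = j \<and> (\<forall>s\<in>P. j \<in> That s \<omega>) \<and> (\<forall>s\<in>Q. j \<notin> That s \<omega>)}
     = prob {\<omega> \<in> space M. i \<omega> = j} * ((\<Prod>s\<in>P. prob {\<omega> \<in> space M. j \<in> That s \<omega>})
        * (\<Prod>s\<in>Q. 1 - prob {\<omega> \<in> space M. j \<in> That s \<omega>}))"
    and "{\<omega> \<in> space M. i \<omega> = j \<and> (\<forall>s\<in>P. j \<in> That s \<omega>) \<and> (\<forall>s\<in>Q. j \<notin> That s \<omega>)} \<in> events"
proof -
  define G where "G s = {\<omega> \<in> space M. j \<in> That s \<omega>}" for s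
  define F where "F s = (if s \<in> P then G s else space M - G s)" for s
  define E where "E = space M \<inter> (\<Inter>s\<in>P\<union>Q. F s)"
  define I where "I = {\<omega> \<in> space M. i \<omega> = j}"
  have Gev: "s \<in> L \<Longrightarrow> G s \<in> events" for s using indj by (auto simp: indep_events_def G_def)
  have Fsub: "F s \<subseteq> space M" for s by (auto simp: F_def G_def)
  have seteq: "{\<omega> \<in> space M. i \<omega> = j \<and> (\<forall>s\<in>P. j \<in> That s \<omega>) \<and> (\<forall>s\<in>Q. j \<notin> That s \<omega>)} = I \<inter> E"
    using PQ by (auto simp: I_def E_def F_def G_def)
  let ?G2 = "{{\<omega> \<in> space M. j \<in> That s \<omega>} | s j. s \<in> L \<and> j \<in> {1..N}}"
  have sa: "sigma_algebra (space M) (sigma_sets (space M) ?G2)"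
    by (rule sigma_algebra_sigma_sets) auto
  interpret S: sigma_algebra "space M" "sigma_sets (space M) ?G2" by (rule sa)
  have Fin2: "s \<in> P \<union> Q \<Longrightarrow> F s \<in> sigma_sets (space M) ?G2" for s
  proof -
    assume s: "s \<in> P \<union> Q"
    have "G s \<in> sigma_sets (space M) ?G2" using s PL QL j by (auto simp: G_def intro!: sigma_sets.Basic)
    then show ?thesis by (auto simp: F_def intro: sigma_sets.Compl)
  qed
  have Ein: "E \<in> sigma_sets (space M) ?G2"
  proof (cases "P \<union> Q = {}")
    case True then show ?thesis by (simp add: E_def sigma_sets_top)
  next
    case False
    have "E = (\<Inter>s\<in>P\<union>Q. F s)" using False Fsub by (auto simp: E_def)
    also have "\<dots> \<in> sigma_sets (space M) ?G2"
      by (rule S.finite_INT) (use False fin Fin2 in auto)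
    finally show ?thesis .
  qed
  have Iin: "I \<in> sigma_sets (space M) {{\<omega> \<in> space M. i \<omega> = j} | j. j \<in> {1..N}}"
    using j by (auto simp: I_def intro!: sigma_sets.Basic)
  have probIE: "prob (I \<inter> E) = prob I * prob E" by (rule indep_setD[OF indi Iin Ein])
  have Iev: "I \<in> events" using indep_setD_ev1[OF indi] Iin by auto
  have Eev: "E \<in> events" using indep_setD_ev2[OF indi] Ein by auto
  have probE: "prob E = (\<Prod>s\<in>P. prob (G s)) * (\<Prod>s\<in>Q. 1 - prob (G s))"
  proof (cases "P \<union> Q = {}")
    case True then show ?thesis by (simp add: E_def prob_space)
  next
    case False
    have ind1: "indep_sets (\<lambda>s. {G s}) L" using indj by (simp add: indep_events_def_alt G_def)
    have ind2: "indep_sets (\<lambda>s. sigma_sets (space M) {G s}) L"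
      by (rule indep_sets_sigma[OF ind1]) (auto simp: Int_stable_def)
    have Eeq: "E = (\<Inter>s\<in>P\<union>Q. F s)" using False Fsub by (auto simp: E_def)
    have memb: "\<forall>s\<in>P\<union>Q. F s \<in> sigma_sets (space M) {G s}"
      by (auto simp: F_def intro: sigma_sets.Basic sigma_sets.Compl)
    have "prob E = (\<Prod>s\<in>P\<union>Q. prob (F s))"
      unfolding Eeq by (rule indep_setsD[OF ind2 _ False _ memb]) (use fin PL QL in auto)
    also have "\<dots> = (\<Prod>s\<in>P. prob (F s)) * (\<Prod>s\<in>Q. prob (F s))"
      by (rule prod.union_disjoint) (use fin PQ in auto)
    also have "(\<Prod>s\<in>P. prob (F s)) = (\<Prod>s\<in>P. prob (G s))"
      by (rule prod.cong) (auto simp: F_def)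
    also have "(\<Prod>s\<in>Q. prob (F s)) = (\<Prod>s\<in>Q. 1 - prob (G s))"
      by (rule prod.cong) (use PQ QL Gev in \<open>auto simp: F_def prob_compl\<close>)
    finally show ?thesis .
  qed
  show "prob {\<omega> \<in> space M. i \<omega> = j \<and> (\<forall>s\<in>P. j \<in> That s \<omega>) \<and> (\<forall>s\<in>Q. j \<notin> That s \<omega>)}
     = prob {\<omega> \<in> space M. i \<omega> = j} * ((\<Prod>s\<in>P. prob {\<omega> \<in> space M. j \<in> That s \<omega>})
        * (\<Prod>s\<in>Q. 1 - prob {\<omega> \<in> space M. j \<in> That s \<omega>}))"
    unfolding seteq probIE probE by (simp add: I_def G_def)
  show "{\<omega> \<in> space M. i \<omega> = j \<and> (\<forall>s\<in>P. j \<in> That s \<omega>) \<and> (\<forall>s\<in>Q. j \<notin> That s \<omega>)} \<in> events"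
    unfolding seteq using Iev Eev by auto
qed


theorem proposition3:
  fixes M :: "'w measure" and N T :: nat and \<epsilon> :: real
    and L :: "'s set" and J :: "nat set"
    and That :: "'s \<Rightarrow> 'w \<Rightarrow> nat set"
    and i :: "'w \<Rightarrow> nat"
    and p q :: "nat \<Rightarrow> 's" and h m :: nat
  assumes "prob_space M"
    and "1 \<le> T" and "T < N"
    and "finite L"
    and "J \<subseteq> {1..N}" and "card J = T"
    and "0 \<le> \<epsilon>" and "\<epsilon> \<le> real (N - T) / real N"
    \<comment> \<open>estimated support sets are subsets of \<Omega>\<close>
    and "\<And>s \<omega>. s \<in> L \<Longrightarrow> \<omega> \<in> space M \<Longrightarrow> That s \<omega> \<subseteq> {1..N}"
    \<comment> \<open>detection / false-alarm probabilities (common support set J)\<close>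
    and "\<And>s j. s \<in> L \<Longrightarrow> j \<in> J \<Longrightarrow>
           measure M {\<omega> \<in> space M. j \<in> That s \<omega>} = 1 - \<epsilon>"
    and "\<And>s j. s \<in> L \<Longrightarrow> j \<in> {1..N} - J \<Longrightarrow>
           measure M {\<omega> \<in> space M. j \<in> That s \<omega>} = real T / real (N - T) * \<epsilon>"
    \<comment> \<open>for fixed j, the events j in That s are mutually independent over sensors\<close>
    and "\<And>j. j \<in> {1..N} \<Longrightarrow>
           prob_space.indep_events M (\<lambda>s. {\<omega> \<in> space M. j \<in> That s \<omega>}) L"
    \<comment> \<open>i is uniform on \<Omega>\<close>
    and "\<And>\<omega>. \<omega> \<in> space M \<Longrightarrow> i \<omega> \<in> {1..N}"
    and "\<And>j. j \<in> {1..N} \<Longrightarrow> measure M {\<omega> \<in> space M. i \<omega> = j} = 1 / real N"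
    \<comment> \<open>i is independent of all estimates\<close>
    and "prob_space.indep_set M
           (sigma_sets (space M) {{\<omega> \<in> space M. i \<omega> = j} | j. j \<in> {1..N}})
           (sigma_sets (space M)
              {{\<omega> \<in> space M. j \<in> That s \<omega>} | s j. s \<in> L \<and> j \<in> {1..N}})"
    \<comment> \<open>distinct sensors p_1..p_h, q_1..q_(m+1)\<close>
    and "1 \<le> h"
    and "p ` {1..h} \<subseteq> L" and "q ` {1..m+1} \<subseteq> L"
    and "inj_on p {1..h}" and "inj_on q {1..m+1}"
    and "p ` {1..h} \<inter> q ` {1..m+1} = {}"
    \<comment> \<open>conditioning events have positive probability\<close>
    and "\<P>(\<omega> in M. (\<forall>l\<in>{1..h}. i \<omega> \<in> That (p l) \<omega>) \<and>
                     (\<forall>l\<in>{1..m}. i \<omega> \<notin> That (q l) \<omega>)) > 0"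
    and "\<P>(\<omega> in M. (\<forall>l\<in>{1..h-1}. i \<omega> \<in> That (p l) \<omega>) \<and>
                     (\<forall>l\<in>{1..m+1}. i \<omega> \<notin> That (q l) \<omega>)) > 0"
  shows "\<P>(\<omega> in M. i \<omega> \<in> J \<bar>
            (\<forall>l\<in>{1..h}. i \<omega> \<in> That (p l) \<omega>) \<and>
            (\<forall>l\<in>{1..m}. i \<omega> \<notin> That (q l) \<omega>))
         \<ge> \<P>(\<omega> in M. i \<omega> \<in> J \<bar>
            (\<forall>l\<in>{1..h-1}. i \<omega> \<in> That (p l) \<omega>) \<and>
            (\<forall>l\<in>{1..m+1}. i \<omega> \<notin> That (q l) \<omega>))"
proof -
  interpret prob_space M by (rule assms(1))
  define a where "a = 1 - \<epsilon>"
  define b where "b = real T / real (N - T) * \<epsilon>"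
  define A where "A h' m' \<omega> = ((\<forall>l\<in>{1..h'}. i \<omega> \<in> That (p l) \<omega>) \<and> (\<forall>l\<in>{1..m'}. i \<omega> \<notin> That (q l) \<omega>))"
    for h' m' \<omega>
  have NT: "real (N - T) > 0" using assms(3) by simp
  have N0: "real N > 0" using assms(3) by simp
  have eN: "\<epsilon> * real N \<le> real (N - T)" using assms(8) N0 by (simp add: field_simps)
  have ba: "b \<le> a"
  proof -
    have "real T * \<epsilon> \<le> real (N - T) * (1 - \<epsilon>)"
      using eN assms(3) by (simp add: of_nat_diff algebra_simps)
    then show ?thesis using NT by (simp add: a_def b_def field_simps)
  qed
  have b0: "b \<ge> 0" using assms(7) NT by (simp add: b_def)
  have a1: "a \<le> 1" using assms(7) by (simp add: a_def)
  have gen: "prob {\<omega> \<in> space M. i \<omega> \<in> J \<and> A h' m' \<omega>} = real T / real N * (a^h' * (1-a)^m') \<and>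
     prob {\<omega> \<in> space M. A h' m' \<omega>} = real T / real N * (a^h' * (1-a)^m')
        + real (N - T) / real N * (b^h' * (1-b)^m')"
    if hh: "h' \<le> h" and mm: "m' \<le> m + 1" for h' m'
  proof -
    define P where "P = p ` {1..h'}"
    define Q where "Q = q ` {1..m'}"
    have PL: "P \<subseteq> L" using assms(17) hh by (auto simp: P_def)
    have QL: "Q \<subseteq> L" using assms(18) mm by (auto simp: Q_def)
    have PQ: "P \<inter> Q = {}"
    proof -
      have "P \<subseteq> p ` {1..h}" "Q \<subseteq> q ` {1..m+1}" using hh mm by (auto simp: P_def Q_def)
      then show ?thesis using assms(21) by blast
    qed
    have cP: "card P = h'" unfolding P_def
      by (rule card_image[THEN trans]) (use assms(19) hh in \<open>auto intro: inj_on_subset\<close>)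
    have cQ: "card Q = m'" unfolding Q_def
      by (rule card_image[THEN trans]) (use assms(20) mm in \<open>auto intro: inj_on_subset\<close>)
    have fP: "finite P" "finite Q" by (auto simp: P_def Q_def)
    define S where "S j = {\<omega> \<in> space M. i \<omega> = j \<and> (\<forall>s\<in>P. j \<in> That s \<omega>) \<and> (\<forall>s\<in>Q. j \<notin> That s \<omega>)}" for j
    have Sev: "S j \<in> events" if j: "j \<in> {1..N}" for j
      unfolding S_def by (rule key(2)[OF PL QL PQ fP assms(12)[OF j] assms(15) j])
    have Sprob: "prob (S j) = 1 / real N * (if j \<in> J then a^h' * (1-a)^m' else b^h' * (1-b)^m')"
      if j: "j \<in> {1..N}" for j
    proof -
      have "prob (S j) = 1 / real N * ((\<Prod>s\<in>P. prob {\<omega> \<in> space M. j \<in> That s \<omega>})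
        * (\<Prod>s\<in>Q. 1 - prob {\<omega> \<in> space M. j \<in> That s \<omega>}))"
        unfolding S_def key(1)[OF PL QL PQ fP assms(12)[OF j] assms(15) j] assms(14)[OF j] ..
      also have "\<dots> = 1 / real N * (if j \<in> J then a^h' * (1-a)^m' else b^h' * (1-b)^m')"
      proof (cases "j \<in> J")
        case True
        have "(\<Prod>s\<in>P. prob {\<omega> \<in> space M. j \<in> That s \<omega>}) = (\<Prod>s\<in>P. a)"
          by (rule prod.cong) (use PL True assms(10) in \<open>auto simp: a_def\<close>)
        moreover have "(\<Prod>s\<in>Q. 1 - prob {\<omega> \<in> space M. j \<in> That s \<omega>}) = (\<Prod>s\<in>Q. 1 - a)"
          by (rule prod.cong) (use QL True assms(10) in \<open>auto simp: a_def\<close>)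
        ultimately show ?thesis using True cP cQ by simp
      next
        case False
        then have jn: "j \<in> {1..N} - J" using j by auto
        have "(\<Prod>s\<in>P. prob {\<omega> \<in> space M. j \<in> That s \<omega>}) = (\<Prod>s\<in>P. b)"
          by (rule prod.cong) (use PL jn assms(11) in \<open>auto simp: b_def\<close>)
        moreover have "(\<Prod>s\<in>Q. 1 - prob {\<omega> \<in> space M. j \<in> That s \<omega>}) = (\<Prod>s\<in>Q. 1 - b)"
          by (rule prod.cong) (use QL jn assms(11) in \<open>auto simp: b_def\<close>)
        ultimately show ?thesis using False cP cQ by simp
      qed
      finally show ?thesis .
    qed
    have Aeq: "A h' m' \<omega> = ((\<forall>s\<in>P. i \<omega> \<in> That s \<omega>) \<and> (\<forall>s\<in>Q. i \<omega> \<notin> That s \<omega>))" for \<omega>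
      by (auto simp: A_def P_def Q_def)
    have U1: "{\<omega> \<in> space M. i \<omega> \<in> J \<and> A h' m' \<omega>} = (\<Union>j\<in>J. S j)"
      by (auto simp: Aeq S_def)
    have U2: "{\<omega> \<in> space M. A h' m' \<omega>} = (\<Union>j\<in>{1..N}. S j)"
      using assms(13) by (auto simp: Aeq S_def)
    have disj: "disjoint_family_on S X" for X by (auto simp: disjoint_family_on_def S_def)
    have finJ: "finite J" using assms(5) finite_subset by blast
    have s1: "prob (\<Union>j\<in>J. S j) = (\<Sum>j\<in>J. prob (S j))"
      by (rule finite_measure_finite_Union[OF finJ _ disj]) (use Sev assms(5) in auto)
    have s2: "prob (\<Union>j\<in>{1..N}. S j) = (\<Sum>j\<in>{1..N}. prob (S j))"
      by (rule finite_measure_finite_Union[OF _ _ disj]) (use Sev in auto)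
    have e1: "(\<Sum>j\<in>J. prob (S j)) = real T / real N * (a^h' * (1-a)^m')"
    proof -
      have "(\<Sum>j\<in>J. prob (S j)) = (\<Sum>j\<in>J. 1 / real N * (a^h' * (1-a)^m'))"
        by (rule sum.cong) (use Sprob assms(5) in auto)
      then show ?thesis using assms(6) by simp
    qed
    have e2: "(\<Sum>j\<in>{1..N} - J. prob (S j)) = real (N - T) / real N * (b^h' * (1-b)^m')"
    proof -
      have "(\<Sum>j\<in>{1..N} - J. prob (S j)) = (\<Sum>j\<in>{1..N} - J. 1 / real N * (b^h' * (1-b)^m'))"
        by (rule sum.cong) (use Sprob in auto)
      moreover have "card ({1..N} - J) = N - T"
        using card_Diff_subset[OF finJ assms(5)] assms(6) by simp
      ultimately show ?thesis by simp
    qed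
    have "(\<Sum>j\<in>{1..N}. prob (S j)) = (\<Sum>j\<in>{1..N} - J. prob (S j)) + (\<Sum>j\<in>J. prob (S j))"
      by (rule sum.subset_diff[OF assms(5)]) simp
    then show ?thesis using U1 U2 s1 s2 e1 e2 by simp
  qed
  obtain h0 where h0: "h = Suc h0" using assms(16) by (cases h) auto
  define X1 where "X1 = real T / real N * (a^h * (1-a)^m)"
  define Y1 where "Y1 = real (N - T) / real N * (b^h * (1-b)^m)"
  define X2 where "X2 = real T / real N * (a^(h-1) * (1-a)^(m+1))"
  define Y2 where "Y2 = real (N - T) / real N * (b^(h-1) * (1-b)^(m+1))"
  have g1: "prob {\<omega> \<in> space M. i \<omega> \<in> J \<and> A h m \<omega>} = X1" "prob {\<omega> \<in> space M. A h m \<omega>} = X1 + Y1"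
    using gen[of h m] by (auto simp: X1_def Y1_def)
  have g2: "prob {\<omega> \<in> space M. i \<omega> \<in> J \<and> A (h-1) (m+1) \<omega>} = X2"
     "prob {\<omega> \<in> space M. A (h-1) (m+1) \<omega>} = X2 + Y2"
    using gen[of "h-1" "m+1"] by (auto simp: X2_def Y2_def)
  have D1: "X1 + Y1 > 0" using assms(22) g1 by (simp add: A_def)
  have D2: "X2 + Y2 > 0" using assms(23) g2 by (simp add: A_def)
  define c where "c = real T / real N * (real (N - T) / real N) * (a^h0 * (1-a)^m * b^h0 * (1-b)^m)"
  have c0: "c \<ge> 0" using ba b0 a1 unfolding c_def by (intro mult_nonneg_nonneg) auto
  define t u A0 B0 C0 D0 where "t = real T / real N" "u = real (N - T) / real N"
    "A0 = a^h0" "B0 = b^h0" "C0 = (1-a)^m" "D0 = (1-b)^m"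
  have "X1 = t * (a * A0 * C0)" "Y1 = u * (b * B0 * D0)" "X2 = t * (A0 * (C0 * (1-a)))"
    "Y2 = u * (B0 * (D0 * (1 - b)))" "c = t * u * (A0 * C0 * B0 * D0)"
    unfolding X1_def Y1_def X2_def Y2_def c_def t_u_A0_B0_C0_D0_def h0 by simp_all
  moreover have "t * (a * A0 * C0) * (u * (B0 * (D0 * (1 - b)))) -
        t * (A0 * (C0 * (1 - a))) * (u * (b * B0 * D0)) =
        t * u * (A0 * C0 * B0 * D0) * (a * (1 - b) - (1 - a) * b)"
    by (simp add: algebra_simps)
  ultimately have "X1 * Y2 - X2 * Y1 = c * (a * (1 - b) - (1 - a) * b)"
    by simp
  also have "\<dots> \<ge> 0" using c0 ba by (intro mult_nonneg_nonneg) (auto simp: algebra_simps)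
  finally have cross: "X2 * Y1 \<le> X1 * Y2" by simp
  have "X2 / (X2 + Y2) \<le> X1 / (X1 + Y1)"
    using D1 D2 cross by (simp add: divide_simps algebra_simps)
  then show ?thesis
    using g1 g2 by (simp add: cond_prob_def A_def)
qed

end
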